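(* Let $n\ge1$, let $p_0$ be the origin of $\mathbb{Z}^n$ and let $p=(p_1,\dots,p_n)\in\mathbb{Z}^n$ with all $p_j\ge 0$. Then there exists at least one linear path from $p_0$ to $p$, i.e. a monotone discrete path $H=(h_0=p_0,h_1,\dots,h_N=p)$ with $N=p_1+\dots+p_n$ such that for every point $h\in H$, the voxel centered at $h$ intersects the line segment $\overline{p_0p}$.
   Context: A monotone discrete path from $p_0$ to $p$ is a sequence of points of $\mathbb{Z}^n$ starting at $p_0$ and ending at $p$ in which each successive point is obtained from the previous one by increasing exactly one coordinate by $1$. The voxel centered at a grid point $h=(h_1,\dots,h_n)\in\mathbb{Z}^n$ is the closed axis-parallel unit hypercube $\prod_{j=1}^n[h_j-\tfrac12,h_j+\tfrac12]$. A monotone discrete path from $p_0$ to $p$ is called linear if the voxel centered at each of its points intersects the segment $\overline{p_0p}$. *)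

theory Defs
  imports "HOL-Analysis.Analysis"
begin

text \<open>Points of Z^n are modelled as int^'n, with 'n an arbitrary finite (nonempty) index type,
so n = CARD('n) >= 1.\<close>

definition real_pt :: "int^'n \<Rightarrow> real^'n" where
  "real_pt h = (\<chi> j. of_int (h $ j))"

definition voxel :: "int^'n \<Rightarrow> (real^'n) set" where
  "voxel h = {x. \<forall>j. \<bar>x $ j - of_int (h $ j)\<bar> \<le> 1/2}"

definition monotone_path :: "int^'n \<Rightarrow> int^'n \<Rightarrow> (int^'n) list \<Rightarrow> bool" where
  "monotone_path a b H \<longleftrightarrow> H \<noteq> [] \<and> hd H = a \<and> last H = b \<and>
     (\<forall>i. Suc i < length H \<longrightarrow> (\<exists>j. H ! Suc i = H ! i + axis j 1))"

definition linear_path :: "int^'n \<Rightarrow> int^'n \<Rightarrow> (int^'n) list \<Rightarrow> bool" where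
  "linear_path a b H \<longleftrightarrow> monotone_path a b H \<and>
     (\<forall>h\<in>set H. voxel h \<inter> closed_segment (real_pt a) (real_pt b) \<noteq> {})"

end

theory Submission
  imports Defs
begin

definition good :: "int^'n \<Rightarrow> int^'n \<Rightarrow> bool" where
  "good p h \<longleftrightarrow> (\<exists>t::real. 0 \<le> t \<and> t \<le> 1 \<and> (\<forall>i. \<bar>t * of_int (p$i) - of_int (h$i)\<bar> \<le> 1/2))"

lemma good_voxel:
  assumes "good p h"
  shows "voxel h \<inter> closed_segment (real_pt 0) (real_pt p) \<noteq> {}"
proof -
  from assms obtain t::real where t: "0 \<le> t" "t \<le> 1" "\<forall>i. \<bar>t * of_int (p$i) - of_int (h$i)\<bar> \<le> 1/2"
    unfolding good_def by blast
  have "t *\<^sub>R real_pt p \<in> voxel h" using t(3) by (simp add: voxel_def real_pt_def)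
  moreover have "t *\<^sub>R real_pt p \<in> closed_segment (real_pt 0) (real_pt p)"
    using t(1,2) unfolding closed_segment_def real_pt_def
    by (auto intro!: exI[of _ t] simp: vec_eq_iff)
  ultimately show ?thesis by blast
qed

lemma sum_axis: "(\<Sum>i\<in>UNIV. (h + axis j (1::int)) $ i) = (\<Sum>i\<in>UNIV. h $ i) + 1"
  by (simp add: sum.distrib axis_def)

lemma step:
  assumes good: "good p h" and bnd: "\<forall>i. 0 \<le> h$i \<and> h$i \<le> p$i"
    and lt: "(\<Sum>i\<in>UNIV. h$i) < (\<Sum>i\<in>UNIV. p$i)"
  shows "\<exists>j. good p (h + axis j 1) \<and> (\<forall>i. 0 \<le> (h + axis j 1)$i \<and> (h + axis j 1)$i \<le> p$i)"
proof -
  define S where "S = {i. h$i < p$i}"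
  have "S \<noteq> {}"
  proof
    assume "S = {}"
    then have "\<forall>i. p$i \<le> h$i" by (auto simp: S_def not_less)
    then have "(\<Sum>i\<in>UNIV. p$i) \<le> (\<Sum>i\<in>UNIV. h$i)" by (intro sum_mono) auto
    with lt show False by simp
  qed
  define U where "U i = (of_int (h$i) + 1/2) / (of_int (p$i) :: real)" for i
  obtain m where m: "m \<in> U ` S" "\<not>(\<exists>x\<in>U ` S. x < m)"
    using ex_min_if_finite[of "U ` S"] \<open>S \<noteq> {}\<close> by auto
  then obtain j where j: "j \<in> S" "\<forall>i\<in>S. U j \<le> U i" by (auto simp: not_less)
  have hj: "h$j < p$j" using j(1) by (simp add: S_def)
  have pj: "p$j > 0" using hj bnd by (meson le_less_trans)
  from good obtain t::real where t: "0 \<le> t" "t \<le> 1" "\<forall>i. \<bar>t * of_int (p$i) - of_int (h$i)\<bar> \<le> 1/2"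
    unfolding good_def by blast
  have Upj: "U j * of_int (p$j) = of_int (h$j) + 1/2" using pj by (simp add: U_def)
  have tU: "t \<le> U j"
  proof -
    have "t * of_int (p$j) \<le> U j * of_int (p$j)" using t(3)[rule_format, of j] Upj by linarith
    then show ?thesis using pj by simp
  qed
  have U1: "U j \<le> 1"
  proof -
    have "of_int (h$j) + 1/2 \<le> (of_int (p$j)::real)" using hj by linarith
    then show ?thesis using pj by (simp add: U_def)
  qed
  have U0: "0 \<le> U j" using bnd pj by (simp add: U_def)
  have "good p (h + axis j 1)"
    unfolding good_def
  proof (intro exI[of _ "U j"] conjI allI U0 U1)
    fix i
    show "\<bar>U j * of_int (p$i) - of_int ((h + axis j 1)$i)\<bar> \<le> 1/2"
    proof (cases "i = j")
      case True
      then show ?thesis using Upj by (simp add: axis_def)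
    next
      case False
      have pi: "0 \<le> p$i" using bnd by (meson order_trans)
      have lo: "t * of_int (p$i) \<le> U j * of_int (p$i)" using tU pi by (simp add: mult_right_mono)
      have up: "U j * of_int (p$i) \<le> of_int (h$i) + 1/2"
      proof (cases "i \<in> S")
        case True
        then have "h$i < p$i" by (simp add: S_def)
        then have ppi: "p$i > 0" using bnd by (meson le_less_trans)
        have "U j \<le> U i" using j(2) True by blast
        then have "U j * of_int (p$i) \<le> U i * of_int (p$i)" using ppi by (simp add: mult_right_mono)
        also have "\<dots> = of_int (h$i) + 1/2" using ppi by (simp add: U_def)
        finally show ?thesis .
      next
        case False
        then have "h$i = p$i" using bnd by (simp add: S_def) (meson antisym not_le)
        have "U j * of_int (p$i) \<le> 1 * of_int (p$i)" using U1 pi by (intro mult_right_mono) auto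
        then show ?thesis using \<open>h$i = p$i\<close> by simp
      qed
      have e: "(h + axis j 1)$i = h$i" using False by (simp add: axis_def)
      have "\<bar>t * of_int (p$i) - of_int (h$i)\<bar> \<le> (1/2::real)" using t(3) by blast
      then show ?thesis unfolding e using lo up by (simp only: abs_le_iff) linarith
    qed
  qed
  moreover have "\<forall>i. 0 \<le> (h + axis j 1)$i \<and> (h + axis j 1)$i \<le> p$i"
    using bnd hj by (auto simp: axis_def)
  ultimately show ?thesis by blast
qed

lemma main:
  fixes p :: "int^'n"
  assumes "\<forall>j. p $ j \<ge> 0"
  shows "k \<le> nat (\<Sum>j\<in>UNIV. p $ j) \<Longrightarrow> \<exists>H. H \<noteq> [] \<and> hd H = 0 \<and> length H = k + 1 \<and>
     (\<forall>i. Suc i < length H \<longrightarrow> (\<exists>j. H ! Suc i = H ! i + axis j 1)) \<and>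
     (\<forall>h\<in>set H. good p h) \<and> (\<forall>i. 0 \<le> last H $ i \<and> last H $ i \<le> p $ i) \<and>
     (\<Sum>i\<in>UNIV. last H $ i) = int k"
proof (induction k)
  case 0
  have "good p 0" unfolding good_def by (intro exI[of _ 0]) simp
  then show ?case using assms by (intro exI[of _ "[0]"]) auto
next
  case (Suc k)
  then obtain H where H: "H \<noteq> []" "hd H = 0" "length H = k + 1"
     "\<forall>i. Suc i < length H \<longrightarrow> (\<exists>j. H ! Suc i = H ! i + axis j 1)"
     "\<forall>h\<in>set H. good p h" "\<forall>i. 0 \<le> last H $ i \<and> last H $ i \<le> p $ i"
     "(\<Sum>i\<in>UNIV. last H $ i) = int k" by auto
  have "(\<Sum>i\<in>UNIV. last H $ i) < (\<Sum>i\<in>UNIV. p$i)" using H(7) Suc.prems by linarith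
  then obtain j where j: "good p (last H + axis j 1)"
    "\<forall>i. 0 \<le> (last H + axis j 1)$i \<and> (last H + axis j 1)$i \<le> p$i"
    using step[of p "last H"] H(5,6) H(1) by auto
  define H' where "H' = H @ [last H + axis j 1]"
  have st: "\<exists>j. H' ! Suc i = H' ! i + axis j 1" if "Suc i < length H'" for i
  proof (cases "Suc i < length H")
    case True
    then show ?thesis using H(4) by (simp add: H'_def nth_append)
  next
    case False
    then have "i = length H - 1" "Suc i = length H" using that by (auto simp: H'_def)
    then show ?thesis using H(1) by (auto simp: H'_def nth_append last_conv_nth)
  qed
  show ?case
    apply (intro exI[of _ H'])
    using H j st sum_axis[of "last H" j] by (auto simp: H'_def)
qed

theorem fact1:
  fixes p :: "int^'n"
  assumes "\<forall>j. p $ j \<ge> 0"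
  shows "\<exists>H. linear_path 0 p H \<and> length H = nat (\<Sum>j\<in>UNIV. p $ j) + 1"
proof -
  obtain H where H: "H \<noteq> []" "hd H = 0" "length H = nat (\<Sum>j\<in>UNIV. p $ j) + 1"
     "\<forall>i. Suc i < length H \<longrightarrow> (\<exists>j. H ! Suc i = H ! i + axis j 1)"
     "\<forall>h\<in>set H. good p h" "\<forall>i. 0 \<le> last H $ i \<and> last H $ i \<le> p $ i"
     "(\<Sum>i\<in>UNIV. last H $ i) = int (nat (\<Sum>j\<in>UNIV. p $ j))"
    using main[OF assms, of "nat (\<Sum>j\<in>UNIV. p $ j)"] by blast
  have sp: "(\<Sum>j\<in>UNIV. p $ j) \<ge> 0" using assms by (simp add: sum_nonneg)
  have "last H = p"
  proof -
    have eq: "(\<Sum>i\<in>UNIV. p$i - last H $ i) = 0" using H(7) sp by (simp add: sum_subtractf)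
    have "\<forall>i\<in>UNIV. p$i - last H $ i = 0"
      using sum_nonneg_eq_0_iff[of UNIV "\<lambda>i. p$i - last H $ i"] eq H(6) by auto
    then show ?thesis by (simp add: vec_eq_iff)
  qed
  show ?thesis unfolding linear_path_def monotone_path_def
    using H(1-5) good_voxel[of p] \<open>last H = p\<close> by (intro exI[of _ H]) blast
qed

end
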